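(* Let $P_Z$ be a latent distribution and $\tau:\Theta\times\mathcal{Z}\to\mathbb{R}^p$ a simulator, and let $P_\theta$ denote the law of $\tau(\theta,Z)$, $Z\sim P_Z$. Suppose the observed data are $X_i^*=\tau(\theta^*,Z_i^* )$, $i=1,\dots,n$, with $Z_1^*,\dots,Z_n^*$ i.i.d. $P_Z$, and let $\mathbf{Z}_m=(Z_1,\dots,Z_m)$ be i.i.d. $P_Z$, independent of the $Z_i^*$. Assume: (i) there exists $C>0$ with $\|\theta_1-\theta_2\|\le C\,d_{SW}(P_{\theta_1},P_{\theta_2})$ for all $\theta_1,\theta_2\in\Theta$; (ii) for $\mathbf{Z}_k$ i.i.d. $P_Z$ of any size $k$, $\sup_{\theta\in\Theta}d_{SW}(\mathbb{Q}^\theta_k,P_\theta)=O_p(k^{-1/2})$, where $\mathbb{Q}^\theta_k=\frac1k\sum_{j=1}^k\delta_{\tau(\theta,Z_j)}$. Then any $\hat\theta_{m,n}\in\arg\min_{\theta\in\Theta}d_{SW}\big(\mathbb{Q}^\theta_m,\mathbb{P}_n\big)$, where $\mathbb{P}_n=\frac1n\sum_{i=1}^n\delta_{X_i^*}$ and $\mathbb{Q}^\theta_m$ uses $\mathbf{Z}_m$, satisfies $$\|\hat\theta_{m,n}-\theta^*\|=O_p(n^{-1/2}+m^{-1/2}).$$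
   Context: For probability measures $\mu,\nu$ on $\mathbb{R}^p$ with finite first moment, the sliced Wasserstein distance is $d_{SW}(\mu,\nu)=\int_{S^{p-1}}W_1(\mu_\omega,\nu_\omega)\,d\sigma(\omega)$, where $\sigma$ is the uniform probability measure on the unit sphere $S^{p-1}$, $\mu_\omega,\nu_\omega$ are the pushforwards of $\mu,\nu$ under $x\mapsto\omega^Tx$, and $W_1$ is the 1-Wasserstein distance on $\mathbb{R}$. $\delta_x$ is the Dirac mass at $x$. The minimizer is assumed to exist. *)

theory Defs
  imports "HOL-Probability.Probability"
begin

definition outer_prob :: "'a measure \<Rightarrow> 'a set \<Rightarrow> real" where
  "outer_prob M A = (INF B \<in> {B \<in> sets M. A \<inter> space M \<subseteq> B}. measure M B)"

definition emp_measure :: "nat \<Rightarrow> (nat \<Rightarrow> 'a::topological_space) \<Rightarrow> 'a measure" where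
  "emp_measure k x = distr (uniform_count_measure {..<k}) borel x"

text \<open>Uniform (normalised surface) probability measure on the unit sphere,
  obtained as the radial projection of the normalised Lebesgue measure on the unit ball.\<close>
definition sphere_unif :: "'a::euclidean_space measure" where
  "sphere_unif = distr (uniform_measure lborel (ball 0 1)) borel (\<lambda>x. x /\<^sub>R norm x)"

definition W1 :: "real measure \<Rightarrow> real measure \<Rightarrow> ennreal" where
  "W1 \<mu> \<nu> = (INF \<pi> \<in> {\<pi>. sets \<pi> = sets (borel \<Otimes>\<^sub>M borel) \<and>
                        distr \<pi> borel fst = \<mu> \<and> distr \<pi> borel snd = \<nu>}.
              \<integral>\<^sup>+ p. ennreal \<bar>fst p - snd p\<bar> \<partial>\<pi>)"

definition dSW :: "'a::euclidean_space measure \<Rightarrow> 'a measure \<Rightarrow> ennreal" where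
  "dSW \<mu> \<nu> = (\<integral>\<^sup>+ \<omega>. W1 (distr \<mu> borel (\<lambda>x. \<omega> \<bullet> x)) (distr \<nu> borel (\<lambda>x. \<omega> \<bullet> x)) \<partial>sphere_unif)"

end

theory Submission
  imports Defs
begin

lemma abs_integral:
  fixes a b :: real
  shows "(\<integral>\<^sup>+t. indicator {t. (a \<le> t) \<noteq> (b \<le> t)} t \<partial>lborel) = ennreal \<bar>a - b\<bar>"
proof -
  have "{t. (a \<le> t) \<noteq> (b \<le> t)} = {min a b..<max a b}" by auto
  then show ?thesis by (simp add: max_def min_def)
qed

lemma W1_lower:
  fixes \<pi> :: "(real \<times> real) measure"
  assumes P: "prob_space \<pi>" and S: "sets \<pi> = sets (borel \<Otimes>\<^sub>M borel)"
    and m1: "distr \<pi> borel fst = \<mu>" and m2: "distr \<pi> borel snd = \<nu>"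
  shows "(\<integral>\<^sup>+t. ennreal \<bar>cdf \<mu> t - cdf \<nu> t\<bar> \<partial>lborel) \<le> (\<integral>\<^sup>+p. ennreal \<bar>fst p - snd p\<bar> \<partial>\<pi>)"
proof -
  interpret prob_space \<pi> by fact
  interpret pair_sigma_finite \<pi> lborel
    by (intro pair_sigma_finite.intro sigma_finite_measure_axioms lborel.sigma_finite_measure_axioms)
  have fst_m[measurable]: "fst \<in> borel_measurable \<pi>" by (subst measurable_cong_sets[OF S refl]) simp
  have snd_m[measurable]: "snd \<in> borel_measurable \<pi>" by (subst measurable_cong_sets[OF S refl]) simp
  have "(\<integral>\<^sup>+p. ennreal \<bar>fst p - snd p\<bar> \<partial>\<pi>) =
     (\<integral>\<^sup>+p. (\<integral>\<^sup>+t. indicator {t. (fst p \<le> t) \<noteq> (snd p \<le> t)} t \<partial>lborel) \<partial>\<pi>)"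
    unfolding abs_integral ..
  also have "\<dots> = (\<integral>\<^sup>+t. (\<integral>\<^sup>+p. indicator {t. (fst p \<le> t) \<noteq> (snd p \<le> t)} t \<partial>\<pi>) \<partial>lborel)"
  proof (rule Fubini'[symmetric, where f="\<lambda>p t. indicator {t. (fst p \<le> t) \<noteq> (snd p \<le> t)} t"])
    show "(\<lambda>(p, t). indicator {t. (fst p \<le> t) \<noteq> (snd p \<le> t)} t :: ennreal) \<in> borel_measurable (\<pi> \<Otimes>\<^sub>M lborel)"
      unfolding indicator_def by measurable
  qed
  also have "\<dots> \<ge> (\<integral>\<^sup>+t. ennreal \<bar>cdf \<mu> t - cdf \<nu> t\<bar> \<partial>lborel)"
  proof (rule nn_integral_mono)
    fix t
    let ?A = "{p \<in> space \<pi>. fst p \<le> t}" and ?B = "{p \<in> space \<pi>. snd p \<le> t}"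
    have A: "?A \<in> sets \<pi>" and B: "?B \<in> sets \<pi>" by measurable
    have c1: "cdf \<mu> t = measure \<pi> ?A"
      unfolding cdf_def m1[symmetric] by (subst measure_distr) (auto simp: vimage_def Int_def intro!: arg_cong[where f="measure \<pi>"])
    have c2: "cdf \<nu> t = measure \<pi> ?B"
      unfolding cdf_def m2[symmetric] by (subst measure_distr) (auto simp: vimage_def Int_def intro!: arg_cong[where f="measure \<pi>"])
    have "measure \<pi> ?A \<le> measure \<pi> (?B \<union> (?A - ?B))"
      by (rule finite_measure_mono) (use A B in auto)
    also have "\<dots> \<le> measure \<pi> ?B + measure \<pi> (?A - ?B)"
      by (rule measure_subadditive) (use A B in auto)
    finally have "measure \<pi> ?A \<le> measure \<pi> ?B + measure \<pi> (?A - ?B)" .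
    moreover have "measure \<pi> ?B \<le> measure \<pi> (?A \<union> (?B - ?A))"
      by (rule finite_measure_mono) (use A B in auto)
    moreover have "measure \<pi> (?A \<union> (?B - ?A)) \<le> measure \<pi> ?A + measure \<pi> (?B - ?A)"
      by (rule measure_subadditive) (use A B in auto)
    moreover have "measure \<pi> (?A - ?B) + measure \<pi> (?B - ?A) = measure \<pi> {p \<in> space \<pi>. (fst p \<le> t) \<noteq> (snd p \<le> t)}"
    proof -
      have "measure \<pi> (?A - ?B) + measure \<pi> (?B - ?A) = measure \<pi> ((?A - ?B) \<union> (?B - ?A))"
        by (rule finite_measure_Union[symmetric]) (use A B in auto)
      also have "(?A - ?B) \<union> (?B - ?A) = {p \<in> space \<pi>. (fst p \<le> t) \<noteq> (snd p \<le> t)}" by auto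
      finally show ?thesis .
    qed
    ultimately have "\<bar>cdf \<mu> t - cdf \<nu> t\<bar> \<le> measure \<pi> {p \<in> space \<pi>. (fst p \<le> t) \<noteq> (snd p \<le> t)}"
      using c1 c2 measure_nonneg[of \<pi> "?A - ?B"] measure_nonneg[of \<pi> "?B - ?A"] by linarith
    also have "ennreal \<dots> = (\<integral>\<^sup>+p. indicator {t. (fst p \<le> t) \<noteq> (snd p \<le> t)} t \<partial>\<pi>)"
    proof -
      have "(\<integral>\<^sup>+p. indicator {t. (fst p \<le> t) \<noteq> (snd p \<le> t)} t \<partial>\<pi>)
          = (\<integral>\<^sup>+p. indicator {p \<in> space \<pi>. (fst p \<le> t) \<noteq> (snd p \<le> t)} p \<partial>\<pi>)"
        by (rule nn_integral_cong) (auto simp: indicator_def)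
      also have "\<dots> = emeasure \<pi> {p \<in> space \<pi>. (fst p \<le> t) \<noteq> (snd p \<le> t)}"
        by (rule nn_integral_indicator) measurable
      finally show ?thesis by (simp add: emeasure_eq_measure)
    qed
    finally show "ennreal \<bar>cdf \<mu> t - cdf \<nu> t\<bar> \<le> (\<integral>\<^sup>+p. indicator {t. (fst p \<le> t) \<noteq> (snd p \<le> t)} t \<partial>\<pi>)"
      by (simp add: ennreal_leI)
  qed
  finally show ?thesis .
qed

lemma W1_upper:
  assumes mu: "real_distribution \<mu>" and nu: "real_distribution \<nu>"
  shows "W1 \<mu> \<nu> \<le> (\<integral>\<^sup>+t. ennreal \<bar>cdf \<mu> t - cdf \<nu> t\<bar> \<partial>lborel)"
proof -
  define \<Omega> where "\<Omega> = restrict_space lborel {0<..<1::real}"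
  define q1 where "q1 = (\<lambda>u. Inf {x. u \<le> cdf \<mu> x})"
  define q2 where "q2 = (\<lambda>u. Inf {x. u \<le> cdf \<nu> x})"
  interpret cd1: cdf_distribution \<mu> using mu by (simp add: cdf_distribution_def)
  interpret cd2: cdf_distribution \<nu> using nu by (simp add: cdf_distribution_def)
  interpret \<Omega>: prob_space \<Omega>
    unfolding \<Omega>_def by (auto simp add: emeasure_restrict_space space_restrict_space intro!: prob_spaceI)
  interpret pair_sigma_finite \<Omega> lborel
    by (intro pair_sigma_finite.intro \<Omega>.sigma_finite_measure_axioms lborel.sigma_finite_measure_axioms)
  have sO: "sets \<Omega> = sets (restrict_space borel {0<..<1::real})"
    unfolding \<Omega>_def by (simp add: sets_restrict_space)
  have q1m[measurable]: "q1 \<in> borel_measurable \<Omega>"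
    unfolding q1_def by (subst measurable_cong_sets[OF sO refl]) (rule cd1.measurable_CI)
  have q2m[measurable]: "q2 \<in> borel_measurable \<Omega>"
    unfolding q2_def by (subst measurable_cong_sets[OF sO refl]) (rule cd2.measurable_CI)
  have spO: "space \<Omega> = {0<..<1}" unfolding \<Omega>_def by (simp add: space_restrict_space)
  have d1: "distr \<Omega> borel q1 = \<mu>" unfolding \<Omega>_def q1_def by (rule cd1.distr_I_eq_M)
  have d2: "distr \<Omega> borel q2 = \<nu>" unfolding \<Omega>_def q2_def by (rule cd2.distr_I_eq_M)
  define \<pi> where "\<pi> = distr \<Omega> (borel \<Otimes>\<^sub>M borel) (\<lambda>u. (q1 u, q2 u))"
  have pim: "(\<lambda>u. (q1 u, q2 u)) \<in> measurable \<Omega> (borel \<Otimes>\<^sub>M borel)" by measurable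
  have "sets \<pi> = sets (borel \<Otimes>\<^sub>M borel)" unfolding \<pi>_def by simp
  moreover have "distr \<pi> borel fst = \<mu>"
    unfolding \<pi>_def using pim by (subst distr_distr) (auto simp: comp_def d1)
  moreover have "distr \<pi> borel snd = \<nu>"
    unfolding \<pi>_def using pim by (subst distr_distr) (auto simp: comp_def d2)
  ultimately have "W1 \<mu> \<nu> \<le> (\<integral>\<^sup>+p. ennreal \<bar>fst p - snd p\<bar> \<partial>\<pi>)"
    unfolding W1_def by (intro INF_lower) auto
  also have "\<dots> = (\<integral>\<^sup>+u. ennreal \<bar>q1 u - q2 u\<bar> \<partial>\<Omega>)"
    unfolding \<pi>_def using pim by (subst nn_integral_distr) auto
  also have "\<dots> = (\<integral>\<^sup>+u. (\<integral>\<^sup>+t. indicator {t. (q1 u \<le> t) \<noteq> (q2 u \<le> t)} t \<partial>lborel) \<partial>\<Omega>)"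
    unfolding abs_integral ..
  also have "\<dots> = (\<integral>\<^sup>+t. (\<integral>\<^sup>+u. indicator {t. (q1 u \<le> t) \<noteq> (q2 u \<le> t)} t \<partial>\<Omega>) \<partial>lborel)"
  proof (rule Fubini'[symmetric, where f="\<lambda>u t. indicator {t. (q1 u \<le> t) \<noteq> (q2 u \<le> t)} t"])
    show "(\<lambda>(u, t). indicator {t. (q1 u \<le> t) \<noteq> (q2 u \<le> t)} t :: ennreal) \<in> borel_measurable (\<Omega> \<Otimes>\<^sub>M lborel)"
      unfolding indicator_def by measurable
  qed
  also have "\<dots> \<le> (\<integral>\<^sup>+t. ennreal \<bar>cdf \<mu> t - cdf \<nu> t\<bar> \<partial>lborel)"
  proof (rule nn_integral_mono)
    fix t
    let ?m = "min (cdf \<mu> t) (cdf \<nu> t)" and ?M = "max (cdf \<mu> t) (cdf \<nu> t)"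
    have "(\<integral>\<^sup>+u. indicator {t. (q1 u \<le> t) \<noteq> (q2 u \<le> t)} t \<partial>\<Omega>) \<le> (\<integral>\<^sup>+u. indicator {?m..?M} u \<partial>\<Omega>)"
    proof (rule nn_integral_mono)
      fix u assume "u \<in> space \<Omega>"
      then have u: "0 < u" "u < 1" using spO by auto
      have "(q1 u \<le> t) = (u \<le> cdf \<mu> t)" unfolding q1_def by (rule cd1.pseudoinverse[OF u, symmetric])
      moreover have "(q2 u \<le> t) = (u \<le> cdf \<nu> t)" unfolding q2_def by (rule cd2.pseudoinverse[OF u, symmetric])
      ultimately show "indicator {t. (q1 u \<le> t) \<noteq> (q2 u \<le> t)} t \<le> (indicator {?m..?M} u :: ennreal)"
        unfolding indicator_def by (cases "u \<le> cdf \<mu> t"; cases "u \<le> cdf \<nu> t") (simp_all add: min_def max_def)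
    qed
    also have "\<dots> = (\<integral>\<^sup>+u. indicator {?m..?M} u * indicator {0<..<1} u \<partial>lborel)"
      unfolding \<Omega>_def by (rule nn_integral_restrict_space) simp
    also have "\<dots> \<le> (\<integral>\<^sup>+u. indicator {?m..?M} u \<partial>lborel)"
      by (rule nn_integral_mono) (auto simp: indicator_def)
    also have "\<dots> = ennreal \<bar>cdf \<mu> t - cdf \<nu> t\<bar>"
      by (simp add: max_def min_def)
    finally show "(\<integral>\<^sup>+u. indicator {t. (q1 u \<le> t) \<noteq> (q2 u \<le> t)} t \<partial>\<Omega>) \<le> ennreal \<bar>cdf \<mu> t - cdf \<nu> t\<bar>" .
  qed
  finally show ?thesis .
qed

lemma W1_eq:
  assumes mu: "real_distribution \<mu>" and nu: "real_distribution \<nu>"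
  shows "W1 \<mu> \<nu> = (\<integral>\<^sup>+t. ennreal \<bar>cdf \<mu> t - cdf \<nu> t\<bar> \<partial>lborel)"
proof (rule antisym)
  show "W1 \<mu> \<nu> \<le> (\<integral>\<^sup>+t. ennreal \<bar>cdf \<mu> t - cdf \<nu> t\<bar> \<partial>lborel)" by (rule W1_upper[OF mu nu])
  show "(\<integral>\<^sup>+t. ennreal \<bar>cdf \<mu> t - cdf \<nu> t\<bar> \<partial>lborel) \<le> W1 \<mu> \<nu>"
    unfolding W1_def
  proof (rule INF_greatest)
    fix \<pi> :: "(real \<times> real) measure"
    assume "\<pi> \<in> {\<pi>. sets \<pi> = sets (borel \<Otimes>\<^sub>M borel) \<and> distr \<pi> borel fst = \<mu> \<and> distr \<pi> borel snd = \<nu>}"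
    then have S: "sets \<pi> = sets (borel \<Otimes>\<^sub>M borel)" and m1: "distr \<pi> borel fst = \<mu>"
      and m2: "distr \<pi> borel snd = \<nu>" by auto
    have fm: "fst \<in> borel_measurable \<pi>" by (subst measurable_cong_sets[OF S refl]) simp
    have "prob_space \<pi>"
    proof (rule prob_spaceI)
      have "emeasure \<pi> (space \<pi>) = emeasure (distr \<pi> borel fst) UNIV"
        using fm by (subst emeasure_distr) auto
      also have "\<dots> = 1" using m1 mu unfolding real_distribution_def
        by (metis prob_space.emeasure_space_1 real_distribution.space_eq_univ mu)
      finally show "emeasure \<pi> (space \<pi>) = 1" .
    qed
    then show "(\<integral>\<^sup>+t. ennreal \<bar>cdf \<mu> t - cdf \<nu> t\<bar> \<partial>lborel) \<le> (\<integral>\<^sup>+p. ennreal \<bar>fst p - snd p\<bar> \<partial>\<pi>)"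
      using W1_lower S m1 m2 by blast
  qed
qed

definition Fm :: "'a::euclidean_space measure \<Rightarrow> 'a \<Rightarrow> real \<Rightarrow> real" where
  "Fm \<mu> \<omega> t = measure \<mu> {x. \<omega> \<bullet> x \<le> t}"

lemma Fm_measurable:
  fixes \<mu> :: "'a::euclidean_space measure"
  assumes P: "prob_space \<mu>" and S: "sets \<mu> = sets borel"
  shows "(\<lambda>(\<omega>, t). Fm \<mu> \<omega> t) \<in> borel_measurable (borel \<Otimes>\<^sub>M borel)"
proof -
  interpret prob_space \<mu> by fact
  define Q where "Q = {z :: ('a \<times> real) \<times> 'a. fst (fst z) \<bullet> snd z \<le> snd (fst z)}"
  have "Q \<in> sets ((borel \<Otimes>\<^sub>M borel) \<Otimes>\<^sub>M borel)"
  proof -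
    have "{z \<in> space ((borel \<Otimes>\<^sub>M borel) \<Otimes>\<^sub>M borel). fst (fst z) \<bullet> snd z \<le> snd (fst z)}
        \<in> sets ((borel \<Otimes>\<^sub>M borel) \<Otimes>\<^sub>M (borel :: 'a measure))"
      by measurable
    then show ?thesis unfolding Q_def by (simp add: space_pair_measure)
  qed
  then have "Q \<in> sets ((borel \<Otimes>\<^sub>M borel) \<Otimes>\<^sub>M \<mu>)"
  proof -
    have eq: "sets ((borel \<Otimes>\<^sub>M borel) \<Otimes>\<^sub>M \<mu>) = sets ((borel \<Otimes>\<^sub>M borel) \<Otimes>\<^sub>M (borel :: 'a measure))"
      by (rule sets_pair_measure_cong[OF refl S])
    show ?thesis by (subst eq) (rule \<open>Q \<in> sets ((borel \<Otimes>\<^sub>M borel) \<Otimes>\<^sub>M borel)\<close>)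
  qed
  from measurable_emeasure_Pair[OF this]
  have "(\<lambda>y. enn2real (emeasure \<mu> (Pair y -` Q))) \<in> borel_measurable (borel \<Otimes>\<^sub>M borel)"
    by measurable
  moreover have "\<And>y. enn2real (emeasure \<mu> (Pair y -` Q)) = (case y of (\<omega>, t) \<Rightarrow> Fm \<mu> \<omega> t)"
    by (auto simp: Fm_def Q_def measure_def vimage_def)
  ultimately show ?thesis by simp
qed

lemma cdf_proj:
  fixes \<mu> :: "'a::euclidean_space measure"
  assumes P: "prob_space \<mu>" and S: "sets \<mu> = sets borel"
  shows "real_distribution (distr \<mu> borel (\<lambda>x. \<omega> \<bullet> x))"
    and "cdf (distr \<mu> borel (\<lambda>x. \<omega> \<bullet> x)) t = Fm \<mu> \<omega> t"
proof -
  interpret prob_space \<mu> by fact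
  have m: "(\<lambda>x. \<omega> \<bullet> x) \<in> borel_measurable \<mu>" by (subst measurable_cong_sets[OF S refl]) simp
  show "real_distribution (distr \<mu> borel (\<lambda>x. \<omega> \<bullet> x))" using m by simp
  have sp: "space \<mu> = UNIV" using sets_eq_imp_space_eq[OF S] by simp
  show "cdf (distr \<mu> borel (\<lambda>x. \<omega> \<bullet> x)) t = Fm \<mu> \<omega> t"
    unfolding cdf_def Fm_def using m by (subst measure_distr) (auto simp: sp vimage_def)
qed

lemma dSW_eq:
  fixes \<mu> \<nu> :: "'a::euclidean_space measure"
  assumes "prob_space \<mu>" "sets \<mu> = sets borel" "prob_space \<nu>" "sets \<nu> = sets borel"
  shows "dSW \<mu> \<nu> = (\<integral>\<^sup>+\<omega>. (\<integral>\<^sup>+t. ennreal \<bar>Fm \<mu> \<omega> t - Fm \<nu> \<omega> t\<bar> \<partial>lborel) \<partial>sphere_unif)"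
  unfolding dSW_def
  by (rule nn_integral_cong) (simp add: W1_eq cdf_proj[OF assms(1,2)] cdf_proj[OF assms(3,4)])

lemma inner_meas:
  fixes \<mu> \<nu> :: "'a::euclidean_space measure"
  assumes "prob_space \<mu>" "sets \<mu> = sets borel" "prob_space \<nu>" "sets \<nu> = sets borel"
  shows "(\<lambda>\<omega>. \<integral>\<^sup>+t. ennreal \<bar>Fm \<mu> \<omega> t - Fm \<nu> \<omega> t\<bar> \<partial>lborel) \<in> borel_measurable sphere_unif"
proof -
  have s: "sets (sphere_unif \<Otimes>\<^sub>M lborel) = sets (borel \<Otimes>\<^sub>M (borel :: real measure))"
    by (rule sets_pair_measure_cong) (simp_all add: sphere_unif_def)
  have m1[measurable]: "(\<lambda>(\<omega>, t). Fm \<mu> \<omega> t) \<in> borel_measurable (borel \<Otimes>\<^sub>M borel)"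
    by (rule Fm_measurable[OF assms(1,2)])
  have m2[measurable]: "(\<lambda>(\<omega>, t). Fm \<nu> \<omega> t) \<in> borel_measurable (borel \<Otimes>\<^sub>M borel)"
    by (rule Fm_measurable[OF assms(3,4)])
  have "(\<lambda>z. ennreal \<bar>(\<lambda>(\<omega>, t). Fm \<mu> \<omega> t) z - (\<lambda>(\<omega>, t). Fm \<nu> \<omega> t) z\<bar>) \<in> borel_measurable (borel \<Otimes>\<^sub>M borel)"
    by measurable
  then have "(\<lambda>z. ennreal \<bar>Fm \<mu> (fst z) (snd z) - Fm \<nu> (fst z) (snd z)\<bar>) \<in> borel_measurable (sphere_unif \<Otimes>\<^sub>M lborel)"
    by (subst measurable_cong_sets[OF s refl]) (simp add: case_prod_beta)
  from lborel.borel_measurable_nn_integral_fst[OF this] show ?thesis by simp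
qed

lemma dSW_sym:
  fixes \<mu> \<nu> :: "'a::euclidean_space measure"
  assumes "prob_space \<mu>" "sets \<mu> = sets borel" "prob_space \<nu>" "sets \<nu> = sets borel"
  shows "dSW \<mu> \<nu> = dSW \<nu> \<mu>"
  by (simp add: dSW_eq assms abs_minus_commute)

lemma dSW_tri:
  fixes \<mu> \<nu> \<rho> :: "'a::euclidean_space measure"
  assumes "prob_space \<mu>" "sets \<mu> = sets borel" "prob_space \<nu>" "sets \<nu> = sets borel"
    "prob_space \<rho>" "sets \<rho> = sets borel"
  shows "dSW \<mu> \<rho> \<le> dSW \<mu> \<nu> + dSW \<nu> \<rho>"
proof -
  have "dSW \<mu> \<rho> \<le> (\<integral>\<^sup>+\<omega>. (\<integral>\<^sup>+t. ennreal \<bar>Fm \<mu> \<omega> t - Fm \<nu> \<omega> t\<bar> + ennreal \<bar>Fm \<nu> \<omega> t - Fm \<rho> \<omega> t\<bar> \<partial>lborel) \<partial>sphere_unif)"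
    unfolding dSW_eq[OF assms(1,2,5,6)]
    by (intro nn_integral_mono) (simp add: ennreal_plus[symmetric] del: ennreal_plus)
  also have "\<dots> = (\<integral>\<^sup>+\<omega>. (\<integral>\<^sup>+t. ennreal \<bar>Fm \<mu> \<omega> t - Fm \<nu> \<omega> t\<bar> \<partial>lborel) + (\<integral>\<^sup>+t. ennreal \<bar>Fm \<nu> \<omega> t - Fm \<rho> \<omega> t\<bar> \<partial>lborel) \<partial>sphere_unif)"
  proof (rule nn_integral_cong)
    fix \<omega>
    have s: "sets (borel \<Otimes>\<^sub>M lborel) = sets (borel \<Otimes>\<^sub>M (borel :: real measure))" by simp
    have a: "(\<lambda>t. Fm \<mu> \<omega> t) \<in> borel_measurable borel"
      using measurable_Pair2[OF Fm_measurable[OF assms(1,2)], of \<omega>] by simp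
    have b: "(\<lambda>t. Fm \<nu> \<omega> t) \<in> borel_measurable borel"
      using measurable_Pair2[OF Fm_measurable[OF assms(3,4)], of \<omega>] by simp
    have c: "(\<lambda>t. Fm \<rho> \<omega> t) \<in> borel_measurable borel"
      using measurable_Pair2[OF Fm_measurable[OF assms(5,6)], of \<omega>] by simp
    show "(\<integral>\<^sup>+t. ennreal \<bar>Fm \<mu> \<omega> t - Fm \<nu> \<omega> t\<bar> + ennreal \<bar>Fm \<nu> \<omega> t - Fm \<rho> \<omega> t\<bar> \<partial>lborel) =
      (\<integral>\<^sup>+t. ennreal \<bar>Fm \<mu> \<omega> t - Fm \<nu> \<omega> t\<bar> \<partial>lborel) + (\<integral>\<^sup>+t. ennreal \<bar>Fm \<nu> \<omega> t - Fm \<rho> \<omega> t\<bar> \<partial>lborel)"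
      using a b c by (intro nn_integral_add) auto
  qed
  also have "\<dots> = dSW \<mu> \<nu> + dSW \<nu> \<rho>"
    unfolding dSW_eq[OF assms(1,2,3,4)] dSW_eq[OF assms(3,4,5,6)]
    by (rule nn_integral_add) (use inner_meas[OF assms(1,2,3,4)] inner_meas[OF assms(3,4,5,6)] in auto)
  finally show ?thesis .
qed

lemma emp_props:
  fixes x :: "nat \<Rightarrow> 'a::euclidean_space"
  assumes "0 < k"
  shows "prob_space (emp_measure k x)" "sets (emp_measure k x) = sets borel"
proof -
  have m: "x \<in> measurable (uniform_count_measure {..<k}) borel"
    by (subst measurable_cong_sets[OF sets_uniform_count_measure_count_space refl]) simp
  have "prob_space (uniform_count_measure {..<k})"
    using assms by (intro prob_space_uniform_count_measure) auto
  then show "prob_space (emp_measure k x)"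
    unfolding emp_measure_def using m by (rule prob_space.prob_space_distr)
  show "sets (emp_measure k x) = sets borel" unfolding emp_measure_def by simp
qed

lemma outer_prob_lt:
  assumes "outer_prob M A < e"
  shows "\<exists>B\<in>sets M. A \<inter> space M \<subseteq> B \<and> measure M B < e"
proof -
  have "bdd_below ((\<lambda>B. measure M B) ` {B \<in> sets M. A \<inter> space M \<subseteq> B})"
    by (intro bdd_belowI[of _ 0]) auto
  with assms show ?thesis unfolding outer_prob_def by (subst (asm) cINF_less_iff) auto
qed

lemma outer_prob_le:
  assumes "B \<in> sets M" "A \<inter> space M \<subseteq> B"
  shows "outer_prob M A \<le> measure M B"
proof -
  have "bdd_below ((\<lambda>B. measure M B) ` {B \<in> sets M. A \<inter> space M \<subseteq> B})"
    by (intro bdd_belowI[of _ 0]) auto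
  then show ?thesis unfolding outer_prob_def by (rule cINF_lower) (use assms in auto)
qed

theorem theorem2:
  fixes PZ :: "'z measure"
    and \<tau> :: "'b::real_normed_vector \<Rightarrow> 'z \<Rightarrow> 'a::euclidean_space"
    and \<Theta> :: "'b set"
    and \<theta>star :: 'b
    and C :: real
    and \<theta>hat :: "nat \<Rightarrow> nat \<Rightarrow> (nat \<Rightarrow> 'z) \<Rightarrow> (nat \<Rightarrow> 'z) \<Rightarrow> 'b"
  assumes PZ: "prob_space PZ"
    and meas: "\<And>\<theta>. \<theta> \<in> \<Theta> \<Longrightarrow> \<tau> \<theta> \<in> PZ \<rightarrow>\<^sub>M borel"
    and \<theta>star: "\<theta>star \<in> \<Theta>"
    and C: "C > 0"
    and ident: "\<And>\<theta>1 \<theta>2. \<theta>1 \<in> \<Theta> \<Longrightarrow> \<theta>2 \<in> \<Theta> \<Longrightarrow>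
        ennreal (norm (\<theta>1 - \<theta>2)) \<le> ennreal C * dSW (distr PZ borel (\<tau> \<theta>1)) (distr PZ borel (\<tau> \<theta>2))"
    and unif: "\<And>\<epsilon>. \<epsilon> > 0 \<Longrightarrow> \<exists>M N. \<forall>k\<ge>N.
        outer_prob (PiM {..<k} (\<lambda>_. PZ))
          {z. (SUP \<theta>\<in>\<Theta>. dSW (emp_measure k (\<lambda>j. \<tau> \<theta> (z j))) (distr PZ borel (\<tau> \<theta>)))
               > ennreal (M / sqrt (real k))} < \<epsilon>"
    and argmin: "\<And>m n zs z. zs \<in> space (PiM {..<n} (\<lambda>_. PZ)) \<Longrightarrow> z \<in> space (PiM {..<m} (\<lambda>_. PZ)) \<Longrightarrow>
        \<theta>hat m n zs z \<in> \<Theta> \<and>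
        (\<forall>\<theta>\<in>\<Theta>. dSW (emp_measure m (\<lambda>j. \<tau> (\<theta>hat m n zs z) (z j))) (emp_measure n (\<lambda>i. \<tau> \<theta>star (zs i)))
                 \<le> dSW (emp_measure m (\<lambda>j. \<tau> \<theta> (z j))) (emp_measure n (\<lambda>i. \<tau> \<theta>star (zs i))))"
  shows "\<forall>\<epsilon>>0. \<exists>M N. \<forall>m\<ge>N. \<forall>n\<ge>N.
    outer_prob (PiM {..<n} (\<lambda>_. PZ) \<Otimes>\<^sub>M PiM {..<m} (\<lambda>_. PZ))
      {(zs, z). norm (\<theta>hat m n zs z - \<theta>star) > M * (1 / sqrt (real n) + 1 / sqrt (real m))} < \<epsilon>"
proof (intro allI impI)
  fix \<epsilon> :: real assume eps: "\<epsilon> > 0"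
  interpret PZ: prob_space PZ by (rule PZ)
  define P where "P = (\<lambda>\<theta>. distr PZ borel (\<tau> \<theta>))"
  have Pp: "prob_space (P \<theta>)" "sets (P \<theta>) = sets borel" if "\<theta> \<in> \<Theta>" for \<theta>
    unfolding P_def using meas[OF that] by (auto intro: PZ.prob_space_distr)
  define S where "S = (\<lambda>k w. SUP \<theta>\<in>\<Theta>. dSW (emp_measure k (\<lambda>j. \<tau> \<theta> (w j))) (P \<theta>))"
  have Sge: "dSW (emp_measure k (\<lambda>j. \<tau> \<theta> (w j))) (P \<theta>) \<le> S k w" if "\<theta> \<in> \<Theta>" for k w \<theta>
    unfolding S_def using that by (rule SUP_upper)
  have key: "ennreal (norm (\<theta>hat m n zs z - \<theta>star)) \<le> ennreal C * (2 * S m z + 2 * S n zs)"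
    if zs: "zs \<in> space (PiM {..<n} (\<lambda>_. PZ))" and z: "z \<in> space (PiM {..<m} (\<lambda>_. PZ))"
      and mn: "0 < m" "0 < n" for m n zs z
  proof -
    define th where "th = \<theta>hat m n zs z"
    have th: "th \<in> \<Theta>" and amin: "\<And>\<theta>. \<theta> \<in> \<Theta> \<Longrightarrow>
        dSW (emp_measure m (\<lambda>j. \<tau> th (z j))) (emp_measure n (\<lambda>i. \<tau> \<theta>star (zs i)))
                 \<le> dSW (emp_measure m (\<lambda>j. \<tau> \<theta> (z j))) (emp_measure n (\<lambda>i. \<tau> \<theta>star (zs i)))"
      using argmin[OF zs z] unfolding th_def by auto
    define Q where "Q = (\<lambda>\<theta>. emp_measure m (\<lambda>j. \<tau> \<theta> (z j)))"
    define Pn where "Pn = emp_measure n (\<lambda>i. \<tau> \<theta>star (zs i))"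
    have Qp: "prob_space (Q \<theta>)" "sets (Q \<theta>) = sets borel" for \<theta>
      unfolding Q_def using emp_props[OF mn(1)] by auto
    have Pnp: "prob_space Pn" "sets Pn = sets borel"
      unfolding Pn_def using emp_props[OF mn(2)] by auto
    note Pth = Pp[OF th] and Pst = Pp[OF \<theta>star]
    have "ennreal (norm (th - \<theta>star)) \<le> ennreal C * dSW (P th) (P \<theta>star)"
      using ident[OF th \<theta>star] unfolding P_def .
    also have "dSW (P th) (P \<theta>star) \<le> dSW (P th) (Q th) + dSW (Q th) (P \<theta>star)"
      by (rule dSW_tri) (use Pth Pst Qp in auto)
    also have "dSW (Q th) (P \<theta>star) \<le> dSW (Q th) Pn + dSW Pn (P \<theta>star)"
      by (rule dSW_tri) (use Pnp Pst Qp in auto)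
    also have "dSW (Q th) Pn \<le> dSW (Q \<theta>star) Pn"
      unfolding Q_def Pn_def by (rule amin[OF \<theta>star])
    also have "dSW (Q \<theta>star) Pn \<le> dSW (Q \<theta>star) (P \<theta>star) + dSW (P \<theta>star) Pn"
      by (rule dSW_tri) (use Pnp Pst Qp in auto)
    also have "dSW (P th) (Q th) = dSW (Q th) (P th)"
      by (rule dSW_sym) (use Pth Qp in auto)
    also have "dSW (P \<theta>star) Pn = dSW Pn (P \<theta>star)"
      by (rule dSW_sym) (use Pnp Pst in auto)
    also have "dSW (Q th) (P th) \<le> S m z" unfolding Q_def by (rule Sge[OF th])
    also have "dSW (Q \<theta>star) (P \<theta>star) \<le> S m z" unfolding Q_def by (rule Sge[OF \<theta>star])
    also have "dSW Pn (P \<theta>star) \<le> S n zs" unfolding Pn_def by (rule Sge[OF \<theta>star])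
    finally have "ennreal (norm (th - \<theta>star)) \<le> ennreal C * (S m z + (S m z + (S n zs + S n zs)))"
      by (simp add: mult_left_mono add_mono add.assoc)
    then show ?thesis unfolding th_def by (simp add: mult_2 add.assoc add.left_commute)
  qed
  show "\<exists>M N. \<forall>m\<ge>N. \<forall>n\<ge>N.
    outer_prob (PiM {..<n} (\<lambda>_. PZ) \<Otimes>\<^sub>M PiM {..<m} (\<lambda>_. PZ))
      {(zs, z). norm (\<theta>hat m n zs z - \<theta>star) > M * (1 / sqrt (real n) + 1 / sqrt (real m))} < \<epsilon>"
  proof -
    obtain M0 N0 where MN: "\<And>k. k \<ge> N0 \<Longrightarrow> outer_prob (PiM {..<k} (\<lambda>_. PZ)) {z. S k z > ennreal (M0 / sqrt (real k))} < \<epsilon>/2"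
      using unif[of "\<epsilon>/2"] eps unfolding S_def P_def by auto
    define M1 where "M1 = max M0 0"
    have M1: "M1 \<ge> 0" unfolding M1_def by simp
    have eM: "ennreal (M0 / sqrt (real k)) = ennreal (M1 / sqrt (real k))" for k
      unfolding M1_def by (cases "M0 \<ge> 0") (auto simp: ennreal_neg divide_nonpos_nonneg max_def)
    show ?thesis
    proof (intro exI[of _ "2 * C * M1"] exI[of _ "max N0 1"] allI impI)
      fix m n :: nat assume m: "max N0 1 \<le> m" and n: "max N0 1 \<le> n"
      let ?X = "PiM {..<n} (\<lambda>_. PZ)" and ?Y = "PiM {..<m} (\<lambda>_. PZ)"
      interpret X: prob_space ?X by (intro prob_space_PiM PZ)
      interpret Y: prob_space ?Y by (intro prob_space_PiM PZ)
      obtain B1 where B1: "B1 \<in> sets ?X" "{z. S n z > ennreal (M0 / sqrt (real n))} \<inter> space ?X \<subseteq> B1"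
          "measure ?X B1 < \<epsilon>/2"
        using outer_prob_lt[OF MN[of n]] n by auto
      obtain B2 where B2: "B2 \<in> sets ?Y" "{z. S m z > ennreal (M0 / sqrt (real m))} \<inter> space ?Y \<subseteq> B2"
          "measure ?Y B2 < \<epsilon>/2"
        using outer_prob_lt[OF MN[of m]] m by auto
      define B where "B = B1 \<times> space ?Y \<union> space ?X \<times> B2"
      have B1s: "B1 \<times> space ?Y \<in> sets (?X \<Otimes>\<^sub>M ?Y)" using B1(1) by auto
      have B2s: "space ?X \<times> B2 \<in> sets (?X \<Otimes>\<^sub>M ?Y)" using B2(1) by auto
      have Bs: "B \<in> sets (?X \<Otimes>\<^sub>M ?Y)" unfolding B_def using B1s B2s by auto
      have sub: "{(zs, z). norm (\<theta>hat m n zs z - \<theta>star) > 2 * C * M1 * (1 / sqrt (real n) + 1 / sqrt (real m))}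
          \<inter> space (?X \<Otimes>\<^sub>M ?Y) \<subseteq> B"
      proof (rule subsetI, rule ccontr)
        fix p assume p: "p \<in> {(zs, z). norm (\<theta>hat m n zs z - \<theta>star) > 2 * C * M1 * (1 / sqrt (real n) + 1 / sqrt (real m))}
          \<inter> space (?X \<Otimes>\<^sub>M ?Y)" and nB: "p \<notin> B"
        obtain zs z where pz: "p = (zs, z)" by (cases p)
        have zs: "zs \<in> space ?X" and z: "z \<in> space ?Y" using p pz by (auto simp: space_pair_measure)
        have gt: "norm (\<theta>hat m n zs z - \<theta>star) > 2 * C * M1 * (1 / sqrt (real n) + 1 / sqrt (real m))"
          using p pz by auto
        have "zs \<notin> B1" "z \<notin> B2" using nB pz zs z unfolding B_def by auto
        then have s1: "S n zs \<le> ennreal (M1 / sqrt (real n))" and s2: "S m z \<le> ennreal (M1 / sqrt (real m))"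
        proof -
          show "S n zs \<le> ennreal (M1 / sqrt (real n))"
          proof (rule ccontr)
            assume "\<not> ?thesis"
            then have "zs \<in> {z. S n z > ennreal (M0 / sqrt (real n))} \<inter> space ?X" using zs eM[of n] by (simp add: not_le)
            then show False using B1(2) \<open>zs \<notin> B1\<close> by blast
          qed
          show "S m z \<le> ennreal (M1 / sqrt (real m))"
          proof (rule ccontr)
            assume "\<not> ?thesis"
            then have "z \<in> {z. S m z > ennreal (M0 / sqrt (real m))} \<inter> space ?Y" using z eM[of m] by (simp add: not_le)
            then show False using B2(2) \<open>z \<notin> B2\<close> by blast
          qed
        qed
        have mn: "0 < m" "0 < n" using m n by auto
        have "ennreal (norm (\<theta>hat m n zs z - \<theta>star)) \<le> ennreal C * (2 * S m z + 2 * S n zs)"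
          by (rule key[OF zs z mn])
        also have "\<dots> \<le> ennreal C * (2 * ennreal (M1 / sqrt (real m)) + 2 * ennreal (M1 / sqrt (real n)))"
          using s1 s2 by (intro mult_left_mono add_mono) auto
        also have "\<dots> = ennreal (C * (2 * (M1 / sqrt (real m)) + 2 * (M1 / sqrt (real n))))"
        proof -
          have a: "0 \<le> M1 / sqrt (real m)" "0 \<le> M1 / sqrt (real n)" using M1 by auto
          have e2: "2 * ennreal x = ennreal (2 * x)" if "0 \<le> x" for x :: real
            using that by (simp add: ennreal_mult)
          show ?thesis using a C
            by (simp add: e2 ennreal_plus[symmetric] ennreal_mult[symmetric] del: ennreal_plus)
        qed
        finally have "norm (\<theta>hat m n zs z - \<theta>star) \<le> C * (2 * (M1 / sqrt (real m)) + 2 * (M1 / sqrt (real n)))"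
          using C M1 by (subst (asm) ennreal_le_iff) auto
        also have "\<dots> = 2 * C * M1 * (1 / sqrt (real n) + 1 / sqrt (real m))"
          by (simp add: field_simps)
        finally show False using gt by simp
      qed
      have "outer_prob (?X \<Otimes>\<^sub>M ?Y)
          {(zs, z). norm (\<theta>hat m n zs z - \<theta>star) > 2 * C * M1 * (1 / sqrt (real n) + 1 / sqrt (real m))}
          \<le> measure (?X \<Otimes>\<^sub>M ?Y) B"
        by (rule outer_prob_le[OF Bs sub])
      also have "\<dots> \<le> measure (?X \<Otimes>\<^sub>M ?Y) (B1 \<times> space ?Y) + measure (?X \<Otimes>\<^sub>M ?Y) (space ?X \<times> B2)"
        unfolding B_def
        by (rule measure_subadditive[OF B1s B2s]) (simp_all add: Y.emeasure_pair_measure_Times[OF B1(1) sets.top] Y.emeasure_pair_measure_Times[OF sets.top B2(1)] ennreal_mult_eq_top_iff)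
      also have "measure (?X \<Otimes>\<^sub>M ?Y) (B1 \<times> space ?Y) = measure ?X B1"
        unfolding measure_def using B1(1) by (simp add: Y.emeasure_pair_measure_Times Y.emeasure_space_1)
      also have "measure (?X \<Otimes>\<^sub>M ?Y) (space ?X \<times> B2) = measure ?Y B2"
        unfolding measure_def using B2(1) by (simp add: Y.emeasure_pair_measure_Times X.emeasure_space_1)
      finally show "outer_prob (?X \<Otimes>\<^sub>M ?Y)
          {(zs, z). norm (\<theta>hat m n zs z - \<theta>star) > 2 * C * M1 * (1 / sqrt (real n) + 1 / sqrt (real m))} < \<epsilon>"
        using B1(3) B2(3) by simp
    qed
  qed
qed

end
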